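(* Let $P,Q\in\Gamma_n$ and $0<r\le R$ with $r\le p_i/q_i\le R$ for all $i$. Let $s,t\in\mathbb{R}$. If $s\ge-1$ and $t\ge-1$, then $$r^{t+1}\Big(\frac{r+1}{2}\Big)^{s-t}\Omega_t(P\|Q)\le\Omega_s(Q\|P)\le R^{t+1}\Big(\frac{R+1}{2}\Big)^{s-t}\Omega_t(P\|Q).$$ If $s\le-1$ and $t\le-1$, then $$R^{t+1}\Big(\frac{R+1}{2}\Big)^{s-t}\Omega_t(P\|Q)\le\Omega_s(Q\|P)\le r^{t+1}\Big(\frac{r+1}{2}\Big)^{s-t}\Omega_t(P\|Q).$$
   Context: $\Gamma_n=\{P=(p_1,\dots,p_n): p_i>0,\ \sum_i p_i=1\}$, $n\ge2$. For $P,Q\in\Gamma_n$ and $s\in\mathbb{R}$: $\Omega_s(P\|Q)=[s(s-1)]^{-1}\big[\sum_i p_i\big(\frac{p_i+q_i}{2p_i}\big)^s-1\big]$ for $s\ne0,1$; $\Omega_0(P\|Q)=\sum_i p_i\ln\frac{2p_i}{p_i+q_i}$; $\Omega_1(P\|Q)=\sum_i\frac{p_i+q_i}{2}\ln\frac{p_i+q_i}{2p_i}$. $\Omega_s(Q\|P)$ is obtained by interchanging $p_i$ and $q_i$ in these formulas. *)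

theory Defs
  imports Complex_Main
begin

definition Gamma :: "nat \<Rightarrow> (nat \<Rightarrow> real) set" where
  "Gamma n = {p. (\<forall>i<n. p i > 0) \<and> (\<Sum>i<n. p i) = 1}"

text \<open>Omega_s(P||Q) as in the paper; Omega s n q p is Omega_s(Q||P).\<close>
definition Omega :: "real \<Rightarrow> nat \<Rightarrow> (nat \<Rightarrow> real) \<Rightarrow> (nat \<Rightarrow> real) \<Rightarrow> real" where
  "Omega s n p q =
    (if s = 0 then (\<Sum>i<n. p i * ln (2 * p i / (p i + q i)))
     else if s = 1 then (\<Sum>i<n. (p i + q i) / 2 * ln ((p i + q i) / (2 * p i)))
     else ((\<Sum>i<n. p i * ((p i + q i) / (2 * p i)) powr s) - 1) / (s * (s - 1)))"

end

theory Submission imports Defs begin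

definition F :: "real \<Rightarrow> real \<Rightarrow> real" where
 "F s u = (if s = 0 then - ln ((1+u)/2) + (u-1)/2
   else if s = 1 then (1+u)/2 * ln ((1+u)/2) - (u-1)/2
   else (((1+u)/2) powr s - 1 - s*(u-1)/2) / (s*(s-1)))"

definition F1 :: "real \<Rightarrow> real \<Rightarrow> real" where
 "F1 s u = (if s = 0 then - 1/(1+u) + 1/2
   else if s = 1 then ln ((1+u)/2) / 2
   else (((1+u)/2) powr (s-1) - 1) / (2*(s-1)))"

definition F2 :: "real \<Rightarrow> real \<Rightarrow> real" where
 "F2 s u = ((1+u)/2) powr (s-2) / 4"

lemma F_deriv: assumes "u > 0" shows "(F s has_real_derivative F1 s u) (at u)"
proof -
  consider "s = 0" | "s = 1" | "s \<noteq> 0" "s \<noteq> 1" by blast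
  then show ?thesis
  proof cases
    case 1
    have "((\<lambda>u. - ln ((1+u)/2) + (u-1)/2) has_real_derivative F1 s u) (at u)"
      using assms 1 unfolding F1_def by (auto intro!: derivative_eq_intros simp: field_simps)
    then show ?thesis using 1 unfolding F_def by simp
  next
    case 2
    have "((\<lambda>u. (1+u)/2 * ln ((1+u)/2) - (u-1)/2) has_real_derivative F1 s u) (at u)"
      using assms 2 unfolding F1_def apply (auto intro!: derivative_eq_intros)
      apply (simp add: divide_simps) done
    then show ?thesis using 2 unfolding F_def by simp
  next
    case 3
    have "((\<lambda>u. (((1+u)/2) powr s - 1 - s*(u-1)/2) / (s*(s-1))) has_real_derivative F1 s u) (at u)"
      using assms 3 unfolding F1_def 
      apply (auto intro!: derivative_eq_intros)
      apply (simp add: powr_diff)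
      apply (simp add: divide_simps)
      apply (simp add: algebra_simps)
      done
    then show ?thesis using 3 unfolding F_def by simp
  qed
qed

lemma F1_deriv: assumes "u > 0" shows "(F1 s has_real_derivative F2 s u) (at u)"
proof -
  consider "s = 0" | "s = 1" | "s \<noteq> 0" "s \<noteq> 1" by blast
  then show ?thesis
  proof cases
    case 1
    have "((\<lambda>u. - 1/(1+u) + 1/2) has_real_derivative F2 s u) (at u)"
      using assms 1 unfolding F2_def by (auto intro!: derivative_eq_intros simp: field_simps powr_minus powr_numeral power2_eq_square)
    then show ?thesis using 1 unfolding F1_def by simp
  next
    case 2
    have "((\<lambda>u. ln ((1+u)/2) / 2) has_real_derivative F2 s u) (at u)"
      using assms 2 unfolding F2_def by (auto intro!: derivative_eq_intros simp: field_simps powr_minus)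
    then show ?thesis using 2 unfolding F1_def by simp
  next
    case 3
    have "((\<lambda>u. (((1+u)/2) powr (s-1) - 1) / (2*(s-1))) has_real_derivative F2 s u) (at u)"
      using assms 3 unfolding F2_def 
      apply (auto intro!: derivative_eq_intros)
      apply (simp add: field_simps powr_diff)
      done
    then show ?thesis using 3 unfolding F1_def by simp
  qed
qed

definition G :: "real \<Rightarrow> real \<Rightarrow> real" where "G t u = u * F t (1/u)"
definition G1 :: "real \<Rightarrow> real \<Rightarrow> real" where "G1 t u = F t (1/u) - F1 t (1/u) / u"
definition G2 :: "real \<Rightarrow> real \<Rightarrow> real" where "G2 t u = F2 t (1/u) / u^3"

lemma G_deriv: assumes "u > 0" shows "(G t has_real_derivative G1 t u) (at u)"
proof -
  have d: "((\<lambda>u. F t (1/u)) has_real_derivative F1 t (1/u) * (- 1/u^2)) (at u)"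
    apply (rule DERIV_chain2[OF F_deriv])
    using assms apply simp
    using assms by (auto intro!: derivative_eq_intros simp: power2_eq_square)
  have eq: "G t = (\<lambda>u. u * F t (1/u))" by (simp add: fun_eq_iff G_def)
  show ?thesis unfolding eq
    by (rule DERIV_cong[OF DERIV_mult[OF DERIV_ident d]]) (use assms in \<open>simp add: G1_def power2_eq_square field_simps\<close>)
qed

lemma G1_deriv: assumes "u > 0" shows "(G1 t has_real_derivative G2 t u) (at u)"
proof -
  have d: "((\<lambda>u. F t (1/u)) has_real_derivative F1 t (1/u) * (- 1/u^2)) (at u)"
    apply (rule DERIV_chain2[OF F_deriv])
    using assms apply simp
    using assms by (auto intro!: derivative_eq_intros simp: power2_eq_square)
  have d1: "((\<lambda>u. F1 t (1/u)) has_real_derivative F2 t (1/u) * (- 1/u^2)) (at u)"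
    apply (rule DERIV_chain2[OF F1_deriv])
    using assms apply simp
    using assms by (auto intro!: derivative_eq_intros simp: power2_eq_square)
  have eq: "G1 t = (\<lambda>u. F t (1/u) - F1 t (1/u) * inverse u)" by (simp add: fun_eq_iff G1_def divide_inverse)
  show ?thesis unfolding eq
    by (rule DERIV_cong[OF DERIV_diff[OF d DERIV_mult[OF d1 DERIV_inverse]]])
     (use assms in \<open>simp_all add: G2_def power2_eq_square power3_eq_cube field_simps\<close>)
qed

lemma taylor_nonneg:
  fixes H Hd Hdd :: "real \<Rightarrow> real"
  assumes "r \<le> 1" "1 \<le> R"
    and d1: "\<And>x. r \<le> x \<Longrightarrow> x \<le> R \<Longrightarrow> (H has_real_derivative Hd x) (at x)"
    and d2: "\<And>x. r \<le> x \<Longrightarrow> x \<le> R \<Longrightarrow> (Hd has_real_derivative Hdd x) (at x)"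
    and h2: "\<And>x. r \<le> x \<Longrightarrow> x \<le> R \<Longrightarrow> Hdd x \<ge> 0"
    and "H 1 = 0" "Hd 1 = 0" "r \<le> u" "u \<le> R"
  shows "H u \<ge> 0"
proof (cases "u \<ge> 1")
  case True
  have "H 1 \<le> H u"
  proof (rule DERIV_nonneg_imp_nondecreasing[OF True])
    fix x assume x: "1 \<le> x" "x \<le> u"
    have "Hd 1 \<le> Hd x"
    proof (rule DERIV_nonneg_imp_nondecreasing[OF x(1)])
      fix y assume "1 \<le> y" "y \<le> x"
      then show "\<exists>z. (Hd has_real_derivative z) (at y) \<and> 0 \<le> z"
        using assms x by (intro exI[of _ "Hdd y"]) (auto intro!: d2 h2)
    qed
    then show "\<exists>y. (H has_real_derivative y) (at x) \<and> 0 \<le> y"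
      using x assms by (intro exI[of _ "Hd x"]) (auto intro!: d1)
  qed
  then show ?thesis using assms by simp
next
  case False
  have "H 1 \<le> H u"
  proof (rule DERIV_nonpos_imp_nonincreasing[of u 1 H])
    show "u \<le> 1" using False by simp
    fix x assume x: "u \<le> x" "x \<le> 1"
    have "Hd x \<le> Hd 1"
    proof (rule DERIV_nonneg_imp_nondecreasing[OF x(2)])
      fix y assume "x \<le> y" "y \<le> 1"
      then show "\<exists>z. (Hd has_real_derivative z) (at y) \<and> 0 \<le> z"
        using assms x by (intro exI[of _ "Hdd y"]) (auto intro!: d2 h2)
    qed
    then show "\<exists>y. (H has_real_derivative y) (at x) \<and> y \<le> 0"
      using x assms by (intro exI[of _ "Hd x"]) (auto intro!: d1)
  qed
  then show ?thesis using assms by simp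
qed


lemma Omega_F:
  assumes "p \<in> Gamma n" "q \<in> Gamma n"
  shows "Omega s n q p = (\<Sum>i<n. q i * F s (p i / q i))"
proof -
  have pp: "\<And>i. i < n \<Longrightarrow> p i > 0" and sp: "(\<Sum>i<n. p i) = 1"
   and qp: "\<And>i. i < n \<Longrightarrow> q i > 0" and sq: "(\<Sum>i<n. q i) = 1"
    using assms unfolding Gamma_def by auto
  have w: "(1 + p i / q i) / 2 = (q i + p i) / (2 * q i)" if "i < n" for i
    using qp[OF that] by (simp add: field_simps)
  have lin: "(\<Sum>i<n. p i - q i) = 0" using sp sq by (simp add: sum_subtractf)
  consider "s = 0" | "s = 1" | "s \<noteq> 0" "s \<noteq> 1" by blast
  then show ?thesis
  proof cases
    case 1
    have "(\<Sum>i<n. q i * F s (p i / q i)) = (\<Sum>i<n. q i * ln (2 * q i / (q i + p i)) + (p i - q i) / 2)"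
    proof (rule sum.cong[OF refl])
      fix i assume "i \<in> {..<n}"
      then have i: "i < n" by simp
      have l: "ln ((q i + p i) / (2 * q i)) = - ln (2 * q i / (q i + p i))"
        using pp[OF i] qp[OF i] by (simp add: ln_div)
      show "q i * F s (p i / q i) = q i * ln (2 * q i / (q i + p i)) + (p i - q i) / 2"
        using 1 qp[OF i] unfolding F_def w[OF i] l by (simp add: field_simps)
    qed
    also have "\<dots> = Omega s n q p"
      using 1 lin unfolding Omega_def by (simp add: sum.distrib sum_divide_distrib[symmetric])
    finally show ?thesis by simp
  next
    case 2
    have "(\<Sum>i<n. q i * F s (p i / q i)) = (\<Sum>i<n. (q i + p i) / 2 * ln ((q i + p i) / (2 * q i)) - (p i - q i) / 2)"
    proof (rule sum.cong[OF refl])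
      fix i assume "i \<in> {..<n}"
      then have i: "i < n" by simp
      show "q i * F s (p i / q i) = (q i + p i) / 2 * ln ((q i + p i) / (2 * q i)) - (p i - q i) / 2"
        using 2 qp[OF i] unfolding F_def w[OF i] by (simp add: field_simps)
    qed
    also have "\<dots> = Omega s n q p"
      using 2 lin unfolding Omega_def by (simp add: sum_subtractf sum_divide_distrib[symmetric])
    finally show ?thesis by simp
  next
    case 3
    have "(\<Sum>i<n. q i * F s (p i / q i)) = (\<Sum>i<n. q i * ((q i + p i) / (2 * q i)) powr s - q i - s / 2 * (p i - q i)) / (s * (s - 1))"
      unfolding sum_divide_distrib
    proof (rule sum.cong[OF refl])
      fix i assume "i \<in> {..<n}"
      then have i: "i < n" by simp
      show "q i * F s (p i / q i) = (q i * ((q i + p i) / (2 * q i)) powr s - q i - s / 2 * (p i - q i)) / (s * (s - 1))"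
        using 3 qp[OF i] unfolding F_def w[OF i] by (simp add: field_simps)
    qed
    also have "\<dots> = Omega s n q p"
    proof -
      have lin2: "(\<Sum>i<n. s * (p i - q i) / 2) = 0"
        using lin by (simp add: sum_divide_distrib[symmetric] sum_distrib_left[symmetric])
      show ?thesis using 3 lin2 sq unfolding Omega_def by (simp add: sum_subtractf sum_distrib_left[symmetric])
    qed
    finally show ?thesis by simp
  qed
qed

lemma Omega_G:
  assumes "p \<in> Gamma n" "q \<in> Gamma n"
  shows "Omega t n p q = (\<Sum>i<n. q i * G t (p i / q i))"
proof -
  have "Omega t n p q = (\<Sum>i<n. p i * F t (q i / p i))" by (rule Omega_F[OF assms(2,1)])
  also have "\<dots> = (\<Sum>i<n. q i * G t (p i / q i))"
  proof (rule sum.cong[OF refl])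
    fix i assume "i \<in> {..<n}"
    then have "q i > 0" using assms(2) unfolding Gamma_def by auto
    then show "p i * F t (q i / p i) = q i * G t (p i / q i)" unfolding G_def by simp
  qed
  finally show ?thesis .
qed


definition phi :: "real \<Rightarrow> real \<Rightarrow> real \<Rightarrow> real" where
  "phi s t u = u powr (t + 1) * ((u + 1) / 2) powr (s - t)"

lemma G2_pos: assumes "u > 0" shows "G2 t u > 0"
proof -
  have "(1 + 1/u)/2 > 0" using assms by (simp add: add_pos_pos)
  then show ?thesis using assms unfolding G2_def F2_def by simp
qed

lemma F2_phi: assumes "u > 0" shows "F2 s u = G2 t u * phi s t u"
proof -
  have a: "(1 + 1/u) / 2 = ((u+1)/2) / u" using assms by (simp add: field_simps)
  have b: "((u+1)/2) powr (t-2) * ((u+1)/2) powr (s-t) = ((u+1)/2) powr (s-2)"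
    by (simp add: powr_add[symmetric])
  have c3: "u powr (3::real) = u^3" using powr_realpow[OF assms, of 3] by simp
  have c0: "u powr (t+1) = u powr (t-2) * u powr 3" 
    using powr_add[of u "t-2" 3] by (simp add: add.commute)
  have c: "u powr (t+1) = u powr (t-2) * u^3" using c0 c3 by simp
  have d: "u powr (t-2) > 0" using assms by simp
  have e: "((u+1)/2/u) powr (t-2) = ((u+1)/2) powr (t-2) / u powr (t-2)"
    using assms by (simp add: powr_divide powr_mult)
  have "G2 t u * phi s t u = ((u+1)/2) powr (t-2) / u powr (t-2) / 4 / u^3 * (u powr (t-2) * u^3) * ((u+1)/2) powr (s-t)"
    unfolding G2_def F2_def phi_def a e c by simp
  also have "\<dots> = ((u+1)/2) powr (t-2) * ((u+1)/2) powr (s-t) / 4"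
    using d assms by (simp add: field_simps)
  also have "\<dots> = F2 s u" unfolding b F2_def by (simp add: add.commute)
  finally show ?thesis by simp
qed

lemma F_one: "F s 1 = 0" unfolding F_def by simp
lemma F1_one: "F1 s 1 = 0" unfolding F1_def by simp
lemma G_one: "G t 1 = 0" unfolding G_def by (simp add: F_one)
lemma G1_one: "G1 t 1 = 0" unfolding G1_def by (simp add: F_one F1_one)

lemma lower_bound:
  assumes "p \<in> Gamma n" "q \<in> Gamma n" "0 < r" "r \<le> 1" "1 \<le> R"
    and u: "\<forall>i<n. r \<le> p i / q i \<and> p i / q i \<le> R"
    and m: "\<And>x. r \<le> x \<Longrightarrow> x \<le> R \<Longrightarrow> m \<le> phi s t x"
  shows "m * Omega t n p q \<le> Omega s n q p"
proof -
  have qp: "\<And>i. i < n \<Longrightarrow> q i > 0" using assms(2) unfolding Gamma_def by auto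
  have H: "0 \<le> F s v - m * G t v" if "r \<le> v" "v \<le> R" for v
  proof (rule taylor_nonneg[where H="\<lambda>v. F s v - m * G t v" and Hd="\<lambda>v. F1 s v - m * G1 t v"
        and Hdd="\<lambda>v. F2 s v - m * G2 t v", OF assms(4,5) _ _ _ _ _ that])
    fix x assume x: "r \<le> x" "x \<le> R"
    then have x0: "x > 0" using assms(3) by simp
    show "((\<lambda>v. F s v - m * G t v) has_real_derivative F1 s x - m * G1 t x) (at x)"
      by (intro DERIV_diff DERIV_cmult F_deriv G_deriv x0)
    show "((\<lambda>v. F1 s v - m * G1 t v) has_real_derivative F2 s x - m * G2 t x) (at x)"
      by (intro DERIV_diff DERIV_cmult F1_deriv G1_deriv x0)
    have "0 \<le> G2 t x * (phi s t x - m)" using G2_pos[OF x0, of t] m[OF x] by simp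
    then show "0 \<le> F2 s x - m * G2 t x" using F2_phi[OF x0, of s t] by (simp add: algebra_simps)
  qed (simp_all add: F_one F1_one G_one G1_one)
  have "Omega s n q p - m * Omega t n p q = (\<Sum>i<n. q i * (F s (p i / q i) - m * G t (p i / q i)))"
    unfolding Omega_F[OF assms(1,2)] Omega_G[OF assms(1,2)]
    by (simp add: sum_distrib_left sum_subtractf right_diff_distrib mult.assoc mult.left_commute[of m])
  also have "\<dots> \<ge> 0"
    using u qp H by (intro sum_nonneg mult_nonneg_nonneg) (auto intro: less_imp_le)
  finally show ?thesis by simp
qed

lemma upper_bound:
  assumes "p \<in> Gamma n" "q \<in> Gamma n" "0 < r" "r \<le> 1" "1 \<le> R"
    and u: "\<forall>i<n. r \<le> p i / q i \<and> p i / q i \<le> R"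
    and m: "\<And>x. r \<le> x \<Longrightarrow> x \<le> R \<Longrightarrow> phi s t x \<le> m"
  shows "Omega s n q p \<le> m * Omega t n p q"
proof -
  have qp: "\<And>i. i < n \<Longrightarrow> q i > 0" using assms(2) unfolding Gamma_def by auto
  have H: "0 \<le> m * G t v - F s v" if "r \<le> v" "v \<le> R" for v
  proof (rule taylor_nonneg[where H="\<lambda>v. m * G t v - F s v" and Hd="\<lambda>v. m * G1 t v - F1 s v"
        and Hdd="\<lambda>v. m * G2 t v - F2 s v", OF assms(4,5) _ _ _ _ _ that])
    fix x assume x: "r \<le> x" "x \<le> R"
    then have x0: "x > 0" using assms(3) by simp
    show "((\<lambda>v. m * G t v - F s v) has_real_derivative m * G1 t x - F1 s x) (at x)"
      by (intro DERIV_diff DERIV_cmult F_deriv G_deriv x0)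
    show "((\<lambda>v. m * G1 t v - F1 s v) has_real_derivative m * G2 t x - F2 s x) (at x)"
      by (intro DERIV_diff DERIV_cmult F1_deriv G1_deriv x0)
    have "0 \<le> G2 t x * (m - phi s t x)" using G2_pos[OF x0, of t] m[OF x] by simp
    then show "0 \<le> m * G2 t x - F2 s x" using F2_phi[OF x0, of s t] by (simp add: algebra_simps)
  qed (simp_all add: F_one F1_one G_one G1_one)
  have "m * Omega t n p q - Omega s n q p = (\<Sum>i<n. q i * (m * G t (p i / q i) - F s (p i / q i)))"
    unfolding Omega_F[OF assms(1,2)] Omega_G[OF assms(1,2)]
    by (simp add: sum_distrib_left sum_subtractf right_diff_distrib mult.assoc mult.left_commute[of m])
  also have "\<dots> \<ge> 0"
    using u qp H by (intro sum_nonneg mult_nonneg_nonneg) (auto intro: less_imp_le)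
  finally show ?thesis by simp
qed


lemma phi_alt: assumes "u > 0"
  shows "phi s t u = (u / ((u+1)/2)) powr (t+1) * ((u+1)/2) powr (s+1)"
proof -
  define w where "w = (u+1)/2"
  have w: "w > 0" using assms unfolding w_def by simp
  have "(u / w) powr (t+1) * w powr (s+1) = u powr (t+1) * (w powr (s+1) / w powr (t+1))"
    using assms w by (simp add: powr_divide)
  also have "w powr (s+1) / w powr (t+1) = w powr (s-t)"
    by (simp add: powr_diff[symmetric])
  finally show ?thesis unfolding phi_def w_def[symmetric] by simp
qed

lemma ratio_mono: fixes x y :: real assumes "0 < x" "x \<le> y" shows "x / ((x+1)/2) \<le> y / ((y+1)/2)"
  using assms by (simp add: field_simps)

lemma phi_mono_up: assumes "-1 \<le> s" "-1 \<le> t" "0 < x" "x \<le> y"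
  shows "phi s t x \<le> phi s t y"
proof -
  have y: "0 < y" using assms by simp
  have "(x / ((x+1)/2)) powr (t+1) * ((x+1)/2) powr (s+1) \<le> (y / ((y+1)/2)) powr (t+1) * ((y+1)/2) powr (s+1)"
    apply (rule mult_mono)
    using assms ratio_mono[OF assms(3,4)] by (auto intro!: powr_mono2)
  then show ?thesis unfolding phi_alt[OF assms(3)] phi_alt[OF y] .
qed

lemma phi_mono_down: assumes "s \<le> -1" "t \<le> -1" "0 < x" "x \<le> y"
  shows "phi s t y \<le> phi s t x"
proof -
  have y: "0 < y" using assms by simp
  have "(y / ((y+1)/2)) powr (t+1) * ((y+1)/2) powr (s+1) \<le> (x / ((x+1)/2)) powr (t+1) * ((x+1)/2) powr (s+1)"
    apply (rule mult_mono)
    using assms ratio_mono[OF assms(3,4)] by (auto intro!: powr_mono2')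
  then show ?thesis unfolding phi_alt[OF assms(3)] phi_alt[OF y] .
qed

theorem theorem4p1:
  fixes n :: nat and p q :: "nat \<Rightarrow> real" and r R s t :: real
  assumes "n \<ge> 2"
    and "p \<in> Gamma n" and "q \<in> Gamma n"
    and "0 < r" and "r \<le> R"
    and "\<forall>i<n. r \<le> p i / q i \<and> p i / q i \<le> R"
  shows "(s \<ge> -1 \<and> t \<ge> -1 \<longrightarrow>
            r powr (t + 1) * ((r + 1) / 2) powr (s - t) * Omega t n p q \<le> Omega s n q p
          \<and> Omega s n q p \<le> R powr (t + 1) * ((R + 1) / 2) powr (s - t) * Omega t n p q)
       \<and> (s \<le> -1 \<and> t \<le> -1 \<longrightarrow>
            R powr (t + 1) * ((R + 1) / 2) powr (s - t) * Omega t n p q \<le> Omega s n q p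
          \<and> Omega s n q p \<le> r powr (t + 1) * ((r + 1) / 2) powr (s - t) * Omega t n p q)"
proof -
  have pp: "\<And>i. i < n \<Longrightarrow> p i > 0" and sp: "(\<Sum>i<n. p i) = 1"
   and qp: "\<And>i. i < n \<Longrightarrow> q i > 0" and sq: "(\<Sum>i<n. q i) = 1"
    using assms unfolding Gamma_def by auto
  have "0 \<in> {..<n}" using assms(1) by simp
  then have ne: "{..<n} \<noteq> {}" by blast
  have r1: "r \<le> 1"
  proof (rule ccontr)
    assume "\<not> r \<le> 1"
    then have "\<And>i. i < n \<Longrightarrow> q i < p i"
      using assms(6) qp by (metis less_le_trans not_le pos_less_divide_eq mult_1)
    then have "(\<Sum>i<n. q i) < (\<Sum>i<n. p i)" using ne by (intro sum_strict_mono) auto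
    then show False using sp sq by simp
  qed
  have R1: "1 \<le> R"
  proof (rule ccontr)
    assume "\<not> 1 \<le> R"
    then have "\<And>i. i < n \<Longrightarrow> p i < q i"
      using assms(6) qp by (metis le_less_trans not_le pos_divide_less_eq mult_1)
    then have "(\<Sum>i<n. p i) < (\<Sum>i<n. q i)" using ne by (intro sum_strict_mono) auto
    then show False using sp sq by simp
  qed
  have A: "r powr (t + 1) * ((r + 1) / 2) powr (s - t) * Omega t n p q \<le> Omega s n q p
          \<and> Omega s n q p \<le> R powr (t + 1) * ((R + 1) / 2) powr (s - t) * Omega t n p q"
    if "s \<ge> -1" "t \<ge> -1"
  proof
    show "r powr (t + 1) * ((r + 1) / 2) powr (s - t) * Omega t n p q \<le> Omega s n q p"
      using lower_bound[OF assms(2,3,4) r1 R1 assms(6), of "phi s t r" s t]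
        phi_mono_up[OF that assms(4)] unfolding phi_def by auto
    show "Omega s n q p \<le> R powr (t + 1) * ((R + 1) / 2) powr (s - t) * Omega t n p q"
      using upper_bound[OF assms(2,3,4) r1 R1 assms(6), of s t "phi s t R"]
        phi_mono_up[OF that] assms(4) unfolding phi_def by auto
  qed
  have B: "R powr (t + 1) * ((R + 1) / 2) powr (s - t) * Omega t n p q \<le> Omega s n q p
          \<and> Omega s n q p \<le> r powr (t + 1) * ((r + 1) / 2) powr (s - t) * Omega t n p q"
    if "s \<le> -1" "t \<le> -1"
  proof
    show "R powr (t + 1) * ((R + 1) / 2) powr (s - t) * Omega t n p q \<le> Omega s n q p"
      using lower_bound[OF assms(2,3,4) r1 R1 assms(6), of "phi s t R" s t]
        phi_mono_down[OF that] assms(4) unfolding phi_def by auto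
    show "Omega s n q p \<le> r powr (t + 1) * ((r + 1) / 2) powr (s - t) * Omega t n p q"
      using upper_bound[OF assms(2,3,4) r1 R1 assms(6), of s t "phi s t r"]
        phi_mono_down[OF that assms(4)] unfolding phi_def by auto
  qed
  show ?thesis using A B by blast
qed

end
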